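(* For any positive integer $n$, there exists a $(3;\ 6^n,\ 3^n,\ 3)$ perfect hash family.
   Context: Let $r,m,q',t$ be integers with $m\ge q'\ge t\ge2$. An $(r;m,q',t)$ perfect hash family (PHF) is a set $\mathcal{X}$ of $r$ functions from a set $\mathcal{B}$ with $|\mathcal{B}|=m$ to a set $\mathcal{C}$ with $|\mathcal{C}|=q'$ such that for every $\mathcal{T}\subseteq\mathcal{B}$ with $|\mathcal{T}|=t$ there is at least one $\varphi\in\mathcal{X}$ whose restriction to $\mathcal{T}$ is injective. Equivalently, an $r\times m$ array over $q'$ symbols in which every $r\times t$ subarray has at least one row with $t$ distinct symbols. *)

theory Defs
  imports Main "HOL-Library.FuncSet"
begin

text \<open>Functions are taken extensional (PiE B (%_. C)) so that distinct
  members of X are distinct as functions on B.\<close>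

definition PHF :: "nat \<Rightarrow> nat \<Rightarrow> nat \<Rightarrow> nat \<Rightarrow> ('b \<Rightarrow> 'c) set \<Rightarrow> 'b set \<Rightarrow> 'c set \<Rightarrow> bool" where
  "PHF r m q t X B C \<longleftrightarrow>
     finite B \<and> card B = m \<and> finite C \<and> card C = q \<and>
     X \<subseteq> PiE B (\<lambda>_. C) \<and> finite X \<and> card X = r \<and>
     (\<forall>T. T \<subseteq> B \<and> card T = t \<longrightarrow> (\<exists>\<phi>\<in>X. inj_on \<phi> T))"

definition exists_PHF :: "nat \<Rightarrow> nat \<Rightarrow> nat \<Rightarrow> nat \<Rightarrow> bool" where
  "exists_PHF r m q t \<longleftrightarrow>
     (\<exists>X :: (nat \<Rightarrow> nat) set. PHF r m q t X {..<m} {..<q})"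

end

theory Submission
  imports Defs
begin

definition good :: "'b set \<Rightarrow> 'c set \<Rightarrow> (nat \<Rightarrow> 'b \<Rightarrow> 'c) \<Rightarrow> bool" where
  "good B C F \<longleftrightarrow> (\<forall>i<3. \<forall>x\<in>B. F i x \<in> C) \<and>
     (\<forall>x\<in>B. \<forall>y\<in>B. x \<noteq> y \<longrightarrow> (\<forall>i<3. \<forall>j<3. F i x = F i y \<and> F j x = F j y \<longrightarrow> i = j)) \<and>
     (\<forall>x\<in>B. \<forall>y\<in>B. \<forall>z\<in>B. x \<noteq> y \<and> y \<noteq> z \<and> x \<noteq> z \<longrightarrow>
        (\<exists>i<3. F i x \<noteq> F i y \<and> F i y \<noteq> F i z \<and> F i x \<noteq> F i z))"

lemma twopair:
  assumes g1: "good B1 C1 F" and g2: "good B2 C2 G"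
    and "a \<in> B1" "b \<in> B1" "a \<noteq> b" "c \<in> B2" "d \<in> B2" "c \<noteq> d"
  shows "\<exists>i<3. F i a \<noteq> F i b \<and> G i c \<noteq> G i d"
proof (rule ccontr)
  assume N: "\<not> ?thesis"
  have P1: "\<And>i j. i < 3 \<Longrightarrow> j < 3 \<Longrightarrow> F i a = F i b \<Longrightarrow> F j a = F j b \<Longrightarrow> i = j"
    using g1 assms(3-5) unfolding good_def by blast
  have P2: "\<And>i j. i < 3 \<Longrightarrow> j < 3 \<Longrightarrow> G i c = G i d \<Longrightarrow> G j c = G j d \<Longrightarrow> i = j"
    using g2 assms(6-8) unfolding good_def by blast
  have c: "\<And>i. i < 3 \<Longrightarrow> F i a = F i b \<or> G i c = G i d" using N by blast
  have "F 0 a = F 0 b \<or> G 0 c = G 0 d" "F 1 a = F 1 b \<or> G 1 c = G 1 d" "F 2 a = F 2 b \<or> G 2 c = G 2 d"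
    using c[of 0] c[of 1] c[of 2] by auto
  then show False using P1[of 0 1] P1[of 0 2] P1[of 1 2] P2[of 0 1] P2[of 0 2] P2[of 1 2] by auto
qed

lemma good_prod:
  assumes g1: "good B1 C1 F" and g2: "good B2 C2 G"
  shows "good (B1 \<times> B2) (C1 \<times> C2) (\<lambda>i p. (F i (fst p), G i (snd p)))"
proof -
  have P1: "\<And>x y i j. x \<in> B1 \<Longrightarrow> y \<in> B1 \<Longrightarrow> x \<noteq> y \<Longrightarrow> i < 3 \<Longrightarrow> j < 3 \<Longrightarrow>
      F i x = F i y \<Longrightarrow> F j x = F j y \<Longrightarrow> i = j" using g1 unfolding good_def by blast
  have P2: "\<And>x y i j. x \<in> B2 \<Longrightarrow> y \<in> B2 \<Longrightarrow> x \<noteq> y \<Longrightarrow> i < 3 \<Longrightarrow> j < 3 \<Longrightarrow>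
      G i x = G i y \<Longrightarrow> G j x = G j y \<Longrightarrow> i = j" using g2 unfolding good_def by blast
  have T1: "\<And>x y z. x \<in> B1 \<Longrightarrow> y \<in> B1 \<Longrightarrow> z \<in> B1 \<Longrightarrow> x \<noteq> y \<Longrightarrow> y \<noteq> z \<Longrightarrow> x \<noteq> z \<Longrightarrow>
        (\<exists>i<3. F i x \<noteq> F i y \<and> F i y \<noteq> F i z \<and> F i x \<noteq> F i z)" using g1 unfolding good_def by blast
  have T2: "\<And>x y z. x \<in> B2 \<Longrightarrow> y \<in> B2 \<Longrightarrow> z \<in> B2 \<Longrightarrow> x \<noteq> y \<Longrightarrow> y \<noteq> z \<Longrightarrow> x \<noteq> z \<Longrightarrow>
        (\<exists>i<3. G i x \<noteq> G i y \<and> G i y \<noteq> G i z \<and> G i x \<noteq> G i z)" using g2 unfolding good_def by blast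
  have TP: "\<And>a b c d. a \<in> B1 \<Longrightarrow> b \<in> B1 \<Longrightarrow> a \<noteq> b \<Longrightarrow> c \<in> B2 \<Longrightarrow> d \<in> B2 \<Longrightarrow> c \<noteq> d \<Longrightarrow>
      \<exists>i<3. F i a \<noteq> F i b \<and> G i c \<noteq> G i d" using twopair[OF g1 g2] by blast
  show ?thesis unfolding good_def
  proof (intro conjI)
    show "\<forall>i<3. \<forall>x\<in>B1 \<times> B2. (F i (fst x), G i (snd x)) \<in> C1 \<times> C2"
      using g1 g2 unfolding good_def by auto
    show "\<forall>x\<in>B1 \<times> B2. \<forall>y\<in>B1 \<times> B2. x \<noteq> y \<longrightarrow> (\<forall>i<3. \<forall>j<3.
        (F i (fst x), G i (snd x)) = (F i (fst y), G i (snd y)) \<and>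
        (F j (fst x), G j (snd x)) = (F j (fst y), G j (snd y)) \<longrightarrow> i = j)"
      using P1 P2 by (metis mem_Times_iff prod.collapse prod.inject)
    show "\<forall>x\<in>B1 \<times> B2. \<forall>y\<in>B1 \<times> B2. \<forall>z\<in>B1 \<times> B2. x \<noteq> y \<and> y \<noteq> z \<and> x \<noteq> z \<longrightarrow>
       (\<exists>i<3. (F i (fst x), G i (snd x)) \<noteq> (F i (fst y), G i (snd y)) \<and>
              (F i (fst y), G i (snd y)) \<noteq> (F i (fst z), G i (snd z)) \<and>
              (F i (fst x), G i (snd x)) \<noteq> (F i (fst z), G i (snd z)))"
    proof (intro ballI impI)
      fix x y z assume xyz: "x \<in> B1 \<times> B2" "y \<in> B1 \<times> B2" "z \<in> B1 \<times> B2" and d: "x \<noteq> y \<and> y \<noteq> z \<and> x \<noteq> z"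
      obtain x1 x2 y1 y2 z1 z2 where e: "x = (x1,x2)" "y = (y1,y2)" "z = (z1,z2)" by (cases x, cases y, cases z) auto
      have m: "x1 \<in> B1" "y1 \<in> B1" "z1 \<in> B1" "x2 \<in> B2" "y2 \<in> B2" "z2 \<in> B2" using xyz e by auto
      have "\<exists>i<3. (F i x1 \<noteq> F i y1 \<or> G i x2 \<noteq> G i y2) \<and> (F i y1 \<noteq> F i z1 \<or> G i y2 \<noteq> G i z2)
                         \<and> (F i x1 \<noteq> F i z1 \<or> G i x2 \<noteq> G i z2)"
      proof (cases "x1 \<noteq> y1 \<and> y1 \<noteq> z1 \<and> x1 \<noteq> z1")
        case True
        then show ?thesis using T1[OF m(1-3)] by blast
      next
        case F: False
        show ?thesis
        proof (cases "x2 \<noteq> y2 \<and> y2 \<noteq> z2 \<and> x2 \<noteq> z2")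
          case True
          then show ?thesis using T2[OF m(4-6)] by blast
        next
          case G: False
          show ?thesis
          proof (cases "x1 = y1")
            case True
            then have "x2 \<noteq> y2" using d e by auto
            then have "z2 = x2 \<or> z2 = y2" using G by auto
            moreover have "z1 \<noteq> x1" if "z2 = x2" using that d e True by auto
            moreover have "z1 \<noteq> y1" if "z2 = y2" using that d e True by auto
            ultimately show ?thesis
              using TP[OF m(1) m(3) _ m(4) m(5) \<open>x2 \<noteq> y2\<close>] TP[OF m(2) m(3) _ m(4) m(5) \<open>x2 \<noteq> y2\<close>] True
              by metis
          next
            case False
            then have "z1 = x1 \<or> z1 = y1" using F by auto
            moreover have "z2 \<noteq> x2" if "z1 = x1" using that d e by auto
            moreover have "z2 \<noteq> y2" if "z1 = y1" using that d e by auto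
            ultimately show ?thesis
              using TP[OF m(1) m(2) False m(4) m(6)] TP[OF m(1) m(2) False m(5) m(6)]
              by metis
          qed
        qed
      qed
      then show "\<exists>i<3. (F i (fst x), G i (snd x)) \<noteq> (F i (fst y), G i (snd y)) \<and>
              (F i (fst y), G i (snd y)) \<noteq> (F i (fst z), G i (snd z)) \<and>
              (F i (fst x), G i (snd x)) \<noteq> (F i (fst z), G i (snd z))" using e by auto
    qed
  qed
qed

lemma good_transfer:
  assumes g: "good B C F" and h: "h \<in> B' \<rightarrow> B" "inj_on h B'" and gg: "g \<in> C \<rightarrow> C'" "inj_on g C"
  shows "good B' C' (\<lambda>i x. g (F i (h x)))"
proof -
  have R: "\<And>i x. i < 3 \<Longrightarrow> x \<in> B \<Longrightarrow> F i x \<in> C" using g unfolding good_def by blast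
  have eq: "g (F i (h x)) = g (F i (h y)) \<longleftrightarrow> F i (h x) = F i (h y)"
    if "i < 3" "x \<in> B'" "y \<in> B'" for i x y
  proof -
    have "h x \<in> B" "h y \<in> B" using h(1) that by auto
    then have "F i (h x) \<in> C" "F i (h y) \<in> C" using R that(1) by auto
    then show ?thesis using inj_on_eq_iff[OF gg(2)] by blast
  qed
  have hh: "h x \<noteq> h y" if "x \<in> B'" "y \<in> B'" "x \<noteq> y" for x y
    using inj_on_eq_iff[OF h(2) that(1,2)] that(3) by blast
  show ?thesis unfolding good_def
  proof (intro conjI)
    show "\<forall>i<3. \<forall>x\<in>B'. g (F i (h x)) \<in> C'" using R h(1) gg(1) by blast
    show "\<forall>x\<in>B'. \<forall>y\<in>B'. x \<noteq> y \<longrightarrow> (\<forall>i<3. \<forall>j<3. g (F i (h x)) = g (F i (h y)) \<and> g (F j (h x)) = g (F j (h y)) \<longrightarrow> i = j)"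
    proof (intro ballI impI allI)
      fix x y i j assume a: "x \<in> B'" "y \<in> B'" "x \<noteq> y" "i < 3" "j < 3"
        "g (F i (h x)) = g (F i (h y)) \<and> g (F j (h x)) = g (F j (h y))"
      then have "F i (h x) = F i (h y)" "F j (h x) = F j (h y)" using eq by auto
      moreover have "h x \<in> B" "h y \<in> B" "h x \<noteq> h y" using a h(1) hh by auto
      ultimately show "i = j" using g a(4,5) unfolding good_def by blast
    qed
    show "\<forall>x\<in>B'. \<forall>y\<in>B'. \<forall>z\<in>B'. x \<noteq> y \<and> y \<noteq> z \<and> x \<noteq> z \<longrightarrow>
        (\<exists>i<3. g (F i (h x)) \<noteq> g (F i (h y)) \<and> g (F i (h y)) \<noteq> g (F i (h z)) \<and> g (F i (h x)) \<noteq> g (F i (h z)))"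
    proof (intro ballI impI)
      fix x y z assume a: "x \<in> B'" "y \<in> B'" "z \<in> B'" "x \<noteq> y \<and> y \<noteq> z \<and> x \<noteq> z"
      have "h x \<in> B" "h y \<in> B" "h z \<in> B" "h x \<noteq> h y" "h y \<noteq> h z" "h x \<noteq> h z" using a h(1) hh by auto
      then obtain i where "i < 3" "F i (h x) \<noteq> F i (h y) \<and> F i (h y) \<noteq> F i (h z) \<and> F i (h x) \<noteq> F i (h z)"
        using g unfolding good_def by blast
      then show "\<exists>i<3. g (F i (h x)) \<noteq> g (F i (h y)) \<and> g (F i (h y)) \<noteq> g (F i (h z)) \<and> g (F i (h x)) \<noteq> g (F i (h z))"
        using eq a by blast
    qed
  qed
qed

lemma lt3: "(i::nat) < 3 \<longleftrightarrow> i = 0 \<or> i = 1 \<or> i = 2" by presburger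
lemma all3: "(\<forall>i<(3::nat). P i) \<longleftrightarrow> P 0 \<and> P 1 \<and> P 2"
  unfolding lt3 by auto
lemma ex3: "(\<exists>i<(3::nat). P i) \<longleftrightarrow> P 0 \<or> P 1 \<or> P 2"
  unfolding lt3 by auto

definition F0 :: "nat \<Rightarrow> nat \<Rightarrow> nat" where
  "F0 i x = [[0,0,1,1,2,2],[0,1,1,2,0,2],[0,1,2,0,2,1::nat]] ! i ! x"

lemma base_A: "\<forall>x\<in>set [0..<6]. \<forall>y\<in>set [0..<6]. \<forall>z\<in>set [0..<6]. x \<noteq> y \<and> y \<noteq> z \<and> x \<noteq> z \<longrightarrow>
   (\<exists>i\<in>set [0..<3]. F0 i x \<noteq> F0 i y \<and> F0 i y \<noteq> F0 i z \<and> F0 i x \<noteq> F0 i z)"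
  unfolding F0_def by code_simp
lemma base_B: "\<forall>x\<in>set [0..<6]. \<forall>y\<in>set [0..<6]. x \<noteq> y \<longrightarrow> (\<forall>i\<in>set [0..<3]. \<forall>j\<in>set [0..<3]. F0 i x = F0 i y \<and> F0 j x = F0 j y \<longrightarrow> i = j)"
  unfolding F0_def by code_simp
lemma base_C: "\<forall>i\<in>set [0..<3]. \<forall>x\<in>set [0..<6]. F0 i x < 3"
  unfolding F0_def by code_simp

lemma base: "good {..<6} {..<3} F0"
proof -
  have s: "set [0..<6] = {..<6::nat}" "set [0..<3] = {..<3::nat}" by auto
  show ?thesis using base_A base_B base_C unfolding good_def s Ball_def Bex_def lessThan_iff by blast
qed

lemma good_n: "\<exists>F. good {..<6^n} {..<3^n} (F :: nat \<Rightarrow> nat \<Rightarrow> nat)"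
proof (induction n)
  case 0
  show ?case unfolding good_def by (rule exI[of _ "\<lambda>i x. 0"]) auto
next
  case (Suc n)
  then obtain F where F: "good {..<6^n} {..<3^n} (F :: nat \<Rightarrow> nat \<Rightarrow> nat)" by blast
  have P: "good ({..<6} \<times> {..<6^n}) ({..<3} \<times> {..<3^n}) (\<lambda>i p. (F0 i (fst p), F i (snd p)))"
    by (rule good_prod[OF base F])
  let ?h = "\<lambda>x::nat. (x mod 6, x div 6)"
  let ?g = "\<lambda>p::nat \<times> nat. fst p + 3 * snd p"
  have h1: "?h \<in> {..<6^Suc n} \<rightarrow> {..<6} \<times> {..<6^n}"
    by (auto simp: less_mult_imp_div_less mult.commute)
  have h2: "inj_on ?h {..<6^Suc n}"
    by (rule inj_onI) (metis div_mod_decomp prod.inject)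
  have g1: "?g \<in> {..<3} \<times> {..<3^n} \<rightarrow> {..<3^Suc n}"
  proof
    fix p :: "nat \<times> nat" assume "p \<in> {..<3::nat} \<times> {..<3^n}"
    then have "fst p < 3" "snd p + 1 \<le> 3^n" by auto
    then have "fst p + 3 * snd p < 3 + 3 * snd p" by simp
    also have "\<dots> = 3 * (snd p + 1)" by simp
    also have "\<dots> \<le> 3 * 3^n" using \<open>snd p + 1 \<le> 3^n\<close> by simp
    finally show "?g p \<in> {..<3^Suc n}" by simp
  qed
  have g2: "inj_on ?g ({..<3} \<times> {..<3^n})"
  proof (rule inj_onI)
    fix p q :: "nat \<times> nat" assume a: "p \<in> {..<3} \<times> {..<3^n}" "q \<in> {..<3} \<times> {..<3^n}" "?g p = ?g q"
    then have "fst p = fst q" by (metis SigmaE lessThan_iff fst_conv mod_mult_self2 mod_less)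
    moreover then have "snd p = snd q" using a(3) by simp
    ultimately show "p = q" by (simp add: prod_eq_iff)
  qed
  show ?case using good_transfer[OF P h1 h2 g1 g2] by blast
qed

lemma good_PHF:
  assumes g: "good {..<m} {..<q} F" and qm: "q < m" and m3: "3 \<le> m"
  shows "exists_PHF 3 m q 3"
proof -
  define X where "X = (\<lambda>i. restrict (F i) {..<m}) ` {..<3}"
  have R: "\<And>i x. i < 3 \<Longrightarrow> x < m \<Longrightarrow> F i x < q" using g unfolding good_def by auto
  have P: "\<And>x y i j. x < m \<Longrightarrow> y < m \<Longrightarrow> x \<noteq> y \<Longrightarrow> i < 3 \<Longrightarrow> j < 3 \<Longrightarrow>
      F i x = F i y \<Longrightarrow> F j x = F j y \<Longrightarrow> i = j" using g unfolding good_def by blast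
  have T3: "\<And>x y z. x < m \<Longrightarrow> y < m \<Longrightarrow> z < m \<Longrightarrow> x \<noteq> y \<Longrightarrow> y \<noteq> z \<Longrightarrow> x \<noteq> z \<Longrightarrow>
        (\<exists>i<3. F i x \<noteq> F i y \<and> F i y \<noteq> F i z \<and> F i x \<noteq> F i z)" using g unfolding good_def lessThan_iff by blast
  have notinj: "\<exists>x<m. \<exists>y<m. x \<noteq> y \<and> F i x = F i y" if "i < 3" for i
  proof (rule ccontr)
    assume "\<not> ?thesis"
    then have "inj_on (F i) {..<m}" by (auto simp: inj_on_def)
    moreover have "F i ` {..<m} \<subseteq> {..<q}" using R that by auto
    ultimately have "card {..<m} \<le> card {..<q}" by (metis card_inj_on_le finite_lessThan)
    then show False using qm by simp
  qed
  have inj: "inj_on (\<lambda>i. restrict (F i) {..<m}) {..<3}"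
  proof (rule inj_onI)
    fix i j assume a: "i \<in> {..<3::nat}" "j \<in> {..<3::nat}" "restrict (F i) {..<m} = restrict (F j) {..<m}"
    obtain x y where xy: "x < m" "y < m" "x \<noteq> y" "F i x = F i y" using notinj a(1) by (meson lessThan_iff)
    have fj: "F j x = F j y" using xy a(3) by (metis lessThan_iff restrict_apply')
    have "i < 3" "j < 3" using a(1,2) by auto
    then show "i = j" using P[OF xy(1-3) _ _ xy(4) fj] by blast
  qed
  have "PHF 3 m q 3 X {..<m} {..<q}"
    unfolding PHF_def
  proof (intro conjI allI impI)
    show "X \<subseteq> PiE {..<m} (\<lambda>_. {..<q})"
    proof
      fix f assume "f \<in> X"
      then obtain i where i: "i < 3" "f = restrict (F i) {..<m}" unfolding X_def by blast
      then show "f \<in> PiE {..<m} (\<lambda>_. {..<q})" using R by (simp add: restrict_PiE_iff)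
    qed
    show "finite X" unfolding X_def by simp
    show "card X = 3" unfolding X_def using card_image[OF inj] by simp
    fix T assume T: "T \<subseteq> {..<m} \<and> card T = 3"
    then obtain x y z where e: "T = {x,y,z}" "x \<noteq> y" "y \<noteq> z" "x \<noteq> z" by (metis card_3_iff)
    then have "x < m" "y < m" "z < m" using T by auto
    then obtain i where i: "i < 3" "F i x \<noteq> F i y \<and> F i y \<noteq> F i z \<and> F i x \<noteq> F i z"
      using T3 e by blast
    have "inj_on (restrict (F i) {..<m}) T" using i e \<open>x < m\<close> \<open>y < m\<close> \<open>z < m\<close>
      by (auto simp: inj_on_def)
    moreover have "restrict (F i) {..<m} \<in> X" unfolding X_def using i by auto
    ultimately show "\<exists>\<phi>\<in>X. inj_on \<phi> T" by blast
  qed auto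
  then show ?thesis unfolding exists_PHF_def by blast
qed

theorem lemma8:
  fixes n :: nat
  assumes "n \<ge> 1"
  shows "exists_PHF 3 (6 ^ n) (3 ^ n) 3"
proof -
  obtain F where F: "good {..<6^n} {..<3^n} (F :: nat \<Rightarrow> nat \<Rightarrow> nat)" using good_n by blast
  have "(3::nat)^n < 6^n" using assms by (simp add: power_strict_mono)
  moreover have "(3::nat) \<le> 6^n"
  proof -
    have "(6::nat) ^ 1 \<le> 6^n" using assms by (rule power_increasing) simp
    then show ?thesis by simp
  qed
  ultimately show ?thesis using good_PHF[OF F] by blast
qed

end
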